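(* Let $V$ be a finite connected subset of $\mathbb{Z}^{2}$. Then \[ \ell_{\mathrm{TS}}(V)\le|V|\left(1+8\left(\frac{|\partial V|}{|V|}\right)^{1/3}\right). \]
   Context: $\mathbb{Z}^2$ is considered with its standard Cayley graph with respect to $e_1=(1,0)$, $e_2=(0,1)$; connectedness refers to this graph. For a finite set $V\subseteq\mathbb{Z}^2$, $\ell_{\mathrm{TS}}(V)$ is the length of a shortest path in this graph visiting every point of $V$ (starting and ending points not prescribed). $\partial V$ is the inner boundary: the set of points of $V$ having at least one neighbour outside $V$. *)

theory Defs
  imports Complex_Main
begin

type_synonym pt = "int \<times> int"

definition adj :: "pt \<Rightarrow> pt \<Rightarrow> bool" where
  "adj p q \<longleftrightarrow> \<bar>fst p - fst q\<bar> + \<bar>snd p - snd q\<bar> = 1"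

definition is_path :: "pt list \<Rightarrow> bool" where
  "is_path xs \<longleftrightarrow> xs \<noteq> [] \<and> (\<forall>i. Suc i < length xs \<longrightarrow> adj (xs ! i) (xs ! Suc i))"

definition connected_Z2 :: "pt set \<Rightarrow> bool" where
  "connected_Z2 V \<longleftrightarrow>
     (\<forall>p\<in>V. \<forall>q\<in>V. \<exists>xs. is_path xs \<and> hd xs = p \<and> last xs = q \<and> set xs \<subseteq> V)"

definition l_TS :: "pt set \<Rightarrow> nat" where
  "l_TS V = (LEAST n. \<exists>xs. is_path xs \<and> V \<subseteq> set xs \<and> length xs - 1 = n)"

definition inner_boundary :: "pt set \<Rightarrow> pt set" where
  "inner_boundary V = {p \<in> V. \<exists>q. adj p q \<and> q \<notin> V}"

end

theory Submission
  imports Defs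
begin

lemma is_path_succ: "is_path xs \<longleftrightarrow> xs \<noteq> [] \<and> successively adj xs"
  unfolding is_path_def successively_conv_nth by blast

definition closedw :: "pt list \<Rightarrow> bool" where
  "closedw w \<longleftrightarrow> is_path w \<and> hd w = last w"

lemma adj_sym: "adj p q \<Longrightarrow> adj q p"
  unfolding adj_def by (simp add: abs_minus_commute)

lemma rotate_closed:
  assumes "closedw c" "p \<in> set c"
  shows "\<exists>c'. closedw c' \<and> hd c' = p \<and> set c' = set c \<and> length c' = length c"
proof -
  obtain u v where c: "c = u @ p # v" using assms(2) by (meson split_list)
  show ?thesis
  proof (cases "u = []")
    case True then show ?thesis using assms c by auto
  next
    case False
    have s: "successively adj c" and h: "hd u = last (p # v)"
      using assms(1) c False unfolding closedw_def is_path_succ by auto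
    define c' where "c' = p # v @ tl u @ [p]"
    have su: "successively adj u" "adj (last u) p" "successively adj (p # v)"
      using s False unfolding c by (auto simp: successively_append_iff)
    have sv: "successively adj (p # v @ tl u)"
    proof (cases "tl u = []")
      case True then show ?thesis using su by simp
    next
      case tl: False
      have "successively adj (hd u # tl u)" using su(1) False by simp
      then have "successively adj (tl u)" "adj (hd u) (hd (tl u))"
        using tl by (auto simp: successively_Cons)
      then have "successively adj ((p # v) @ tl u)" using su(3) tl h
        unfolding successively_append_iff by (simp add: successively.simps(1,2) del: successively.simps(3) last.simps)
      then show ?thesis by simp
    qed
    have la: "adj (last (p # v @ tl u)) p"
    proof (cases "tl u = []")
      case True
      then have "u = [hd u]" using False by (metis list.collapse)
      then show ?thesis using su(2) h True by (metis append_Nil2 append_Cons last.simps last_appendR list.distinct(1) last_ConsL)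
    next
      case tl: False
      then have "last u = last (tl u)" using False by (metis last_tl)
      then show ?thesis using su(2) tl by simp
    qed
    have "successively adj ((p # v @ tl u) @ [p])" using sv la
      unfolding successively_append_iff by (simp add: successively.simps(1,2) del: successively.simps(3) last.simps)
    then have "successively adj c'" unfolding c'_def by simp
    moreover have "set c' = set c"
    proof -
      have "set u = insert (hd u) (set (tl u))" using False by (metis list.collapse list.simps(15))
      moreover have "hd u \<in> insert p (set v)" using h by (metis last_in_set list.distinct(1) list.simps(15))
      ultimately show ?thesis unfolding c c'_def by auto
    qed
    moreover have "length c' = length c" unfolding c c'_def using False by (cases u) auto
    moreover have "c' \<noteq> []" "hd c' = p" "last c' = p" unfolding c'_def by auto
    ultimately show ?thesis unfolding closedw_def is_path_succ by metis
  qed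
qed

lemma succ_split: "successively P (u @ p # v) \<longleftrightarrow> successively P (u @ [p]) \<and> successively P (p # v)"
proof -
  have "u @ p # v = (u @ [p]) @ v" by simp
  then show ?thesis by (simp only: successively_append_iff) (auto simp: successively_Cons)
qed

lemma merge_closed:
  assumes c: "closedw c" and w: "closedw w" and p: "p \<in> set c" and q: "q \<in> set w"
    and pq: "p = q \<or> adj p q"
  shows "\<exists>c''. closedw c'' \<and> set c'' = set c \<union> set w \<and> length c'' - 1 \<le> (length c - 1) + (length w - 1) + 2"
proof -
  obtain w' where w': "closedw w'" "hd w' = q" "set w' = set w" "length w' = length w"
    using rotate_closed[OF w q] by blast
  obtain u v where cuv: "c = u @ p # v" using p by (meson split_list)
  have sw: "successively adj w'" "w' \<noteq> []" "last w' = q" using w' unfolding closedw_def is_path_succ by auto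
  have sc: "successively adj (u @ [p])" "successively adj (p # v)" "hd c = last c"
    using c succ_split[of adj u p v] unfolding cuv closedw_def is_path_succ by auto
  have hw: "w' = hd w' # tl w'" using sw(2) by simp
  show ?thesis
  proof (cases "p = q")
    case True
    define c'' where "c'' = u @ w' @ v"
    have s1: "successively adj (w' @ v)"
      using sw sc(2) True unfolding successively_append_iff by (auto simp: successively_Cons)
    have "successively adj (u @ (w' @ v))"
      using s1 sc(1) sw True w'(2) unfolding successively_append_iff by (auto simp: successively_Cons)
    moreover have "hd c'' = hd c" "last c'' = last c" "c'' \<noteq> []"
      unfolding c''_def cuv using sw w'(2) True by (auto simp: hd_append)
    moreover have "p \<in> set w'" using sw(2) w'(2) True by (metis list.set_sel(1))
    then have "set c'' = set c \<union> set w" unfolding c''_def cuv using w'(3) by auto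
    moreover have "length c'' - 1 \<le> (length c - 1) + (length w - 1) + 2"
      unfolding c''_def cuv using w'(4) sw(2) by auto
    ultimately have "closedw c''" "set c'' = set c \<union> set w" "length c'' - 1 \<le> (length c - 1) + (length w - 1) + 2"
      using sc(3) unfolding closedw_def is_path_succ c''_def by auto
    then show ?thesis by blast
  next
    case False
    then have a: "adj p q" using pq by simp
    define c'' where "c'' = (u @ [p]) @ (w' @ (p # v))"
    have s1: "successively adj (w' @ (p # v))"
      using sw sc(2) a adj_sym unfolding successively_append_iff by auto
    have "successively adj c''" unfolding c''_def
      using s1 sc(1) sw a w'(2) unfolding successively_append_iff by auto
    moreover have "hd c'' = hd c" "last c'' = last c" "c'' \<noteq> []"
      unfolding c''_def cuv using sw by (auto simp: hd_append)
    moreover have "set c'' = set c \<union> set w" unfolding c''_def cuv using w'(3) by auto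
    moreover have "length c'' - 1 \<le> (length c - 1) + (length w - 1) + 2"
      unfolding c''_def cuv using w'(4) sw(2) by auto
    ultimately have "closedw c''" "set c'' = set c \<union> set w" "length c'' - 1 \<le> (length c - 1) + (length w - 1) + 2"
      using sc(3) unfolding closedw_def is_path_succ by auto
    then show ?thesis by blast
  qed
qed

lemma exit_idx:
  assumes "hd xs \<in> S" "last xs \<notin> S" "xs \<noteq> []"
  shows "\<exists>i. Suc i < length xs \<and> xs ! i \<in> S \<and> xs ! Suc i \<notin> S"
proof -
  define P where "P k \<longleftrightarrow> k < length xs \<and> xs ! k \<notin> S" for k
  have "P (length xs - 1)" using assms unfolding P_def by (simp add: last_conv_nth)
  then have Pk0: "P (LEAST k. P k)" by (rule LeastI)
  define k where "k = (LEAST k. P k)"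
  have Pk: "P k" using Pk0 k_def by simp
  have "k \<noteq> 0"
  proof
    assume "k = 0" then show False using Pk assms(1,3) unfolding P_def by (simp add: hd_conv_nth)
  qed
  then obtain i where i: "k = Suc i" by (cases k) auto
  have "\<not> P i" using i k_def not_less_Least by (metis lessI)
  then show ?thesis using Pk i unfolding P_def by auto
qed

lemma touch:
  assumes conn: "connected_Z2 V" and c: "closedw c" "set c \<subseteq> V"
    and Ws: "\<forall>w\<in>Ws. closedw w \<and> set w \<subseteq> V" and cov: "V \<subseteq> set c \<union> \<Union>(set ` Ws)"
    and ne: "Ws \<noteq> {}"
  shows "\<exists>w\<in>Ws. \<exists>p\<in>set c. \<exists>q\<in>set w. p = q \<or> adj p q"
proof -
  obtain w0 where w0: "w0 \<in> Ws" using ne by blast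
  have w0ne: "w0 \<noteq> []" using Ws w0 unfolding closedw_def is_path_def by auto
  have cne: "c \<noteq> []" using c unfolding closedw_def is_path_def by auto
  define q0 where "q0 = hd w0"
  have q0a: "q0 \<in> set w0" using w0ne unfolding q0_def by simp
  then have q0: "q0 \<in> set w0" "q0 \<in> V" using Ws w0 by auto
  have p0: "hd c \<in> set c" "hd c \<in> V" using cne c by auto
  obtain xs where xs: "is_path xs" "hd xs = hd c" "last xs = q0" "set xs \<subseteq> V"
    using conn p0(2) q0(2) unfolding connected_Z2_def by blast
  show ?thesis
  proof (cases "q0 \<in> set c")
    case True then show ?thesis using w0 q0 by blast
  next
    case False
    have xne: "xs \<noteq> []" using xs unfolding is_path_def by auto
    obtain i where i: "Suc i < length xs" "xs ! i \<in> set c" "xs ! Suc i \<notin> set c"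
      using exit_idx[of xs "set c"] xs False p0 xne by auto
    have "xs ! Suc i \<in> V" using xs(4) i(1) by (meson nth_mem subsetD)
    then obtain w where w: "w \<in> Ws" "xs ! Suc i \<in> set w" using cov i(3) by blast
    have "adj (xs ! i) (xs ! Suc i)" using xs(1) i(1) unfolding is_path_def by blast
    then show ?thesis using w i by blast
  qed
qed

lemma merge_all:
  assumes conn: "connected_Z2 V"
  shows "finite Ws \<Longrightarrow> card Ws = n \<Longrightarrow> closedw c \<Longrightarrow> set c \<subseteq> V \<Longrightarrow>
    (\<forall>w\<in>Ws. closedw w \<and> set w \<subseteq> V) \<Longrightarrow> V \<subseteq> set c \<union> \<Union>(set ` Ws) \<Longrightarrow>
    \<exists>c'. closedw c' \<and> V \<subseteq> set c' \<and>
       length c' - 1 \<le> (length c - 1) + (\<Sum>w\<in>Ws. length w - 1) + 2 * card Ws"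
proof (induction n arbitrary: Ws c)
  case 0
  then have "Ws = {}" by simp
  then show ?case using 0 by auto
next
  case (Suc n)
  then have ne: "Ws \<noteq> {}" by auto
  obtain w p q where wpq: "w \<in> Ws" "p \<in> set c" "q \<in> set w" "p = q \<or> adj p q"
    using touch[OF conn Suc.prems(3,4,5,6) ne] by blast
  obtain c'' where c'': "closedw c''" "set c'' = set c \<union> set w"
      "length c'' - 1 \<le> (length c - 1) + (length w - 1) + 2"
    using merge_closed[OF Suc.prems(3) _ wpq(2,3,4)] Suc.prems(5) wpq(1) by blast
  have f: "finite (Ws - {w})" "card (Ws - {w}) = n" using Suc.prems(1,2) wpq(1) by auto
  have "set c'' \<subseteq> V" using c''(2) Suc.prems(4,5) wpq(1) by auto
  moreover have "V \<subseteq> set c'' \<union> \<Union>(set ` (Ws - {w}))" using Suc.prems(6) c''(2) by auto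
  ultimately obtain c' where c': "closedw c'" "V \<subseteq> set c'"
     "length c' - 1 \<le> (length c'' - 1) + (\<Sum>w\<in>Ws - {w}. length w - 1) + 2 * card (Ws - {w})"
    using Suc.IH[OF f c''(1)] Suc.prems(5) by blast
  have "(\<Sum>w\<in>Ws. length w - 1) = (length w - 1) + (\<Sum>w\<in>Ws - {w}. length w - 1)"
    using Suc.prems(1) wpq(1) by (simp add: sum.remove)
  moreover have "card Ws = Suc (card (Ws - {w}))" using f Suc.prems(2) by simp
  ultimately show ?case using c' c''(3) by (intro exI[of _ c']) auto
qed

lemma lTS_le:
  assumes "closedw c" "V \<subseteq> set c"
  shows "l_TS V \<le> length c - 1"
  unfolding l_TS_def using assms unfolding closedw_def by (intro Least_le) blast

lemma succ_upt: "(\<And>k. P k (Suc k)) \<Longrightarrow> successively P [0..<m]"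
proof (induction m)
  case (Suc m) then show ?case by (cases m) (auto simp: successively_append_iff)
qed simp

lemma img_line: "(\<lambda>k. (a + int k, y::int)) ` {0..<m} = {a..a + int m - 1} \<times> {y}"
proof (rule set_eqI, rule iffI)
  fix p assume "p \<in> (\<lambda>k. (a + int k, y::int)) ` {0..<m}" then show "p \<in> {a..a + int m - 1} \<times> {y}" by auto
next
  fix p assume "p \<in> {a..a + int m - 1} \<times> {y}"
  then obtain x where p: "p = (x, y)" "a \<le> x" "x \<le> a + int m - 1" by auto
  then have "p = (a + int (nat (x - a)), y)" "nat (x - a) \<in> {0..<m}" by auto
  then show "p \<in> (\<lambda>k. (a + int k, y::int)) ` {0..<m}" by blast
qed

definition cyc :: "int \<Rightarrow> nat \<Rightarrow> int \<Rightarrow> pt list" where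
  "cyc a m y = map (\<lambda>k. (a + int k, y)) [0..<m] @ map (\<lambda>k. (a + int k, y + 1)) (rev [0..<m]) @ [(a, y)]"

lemma cyc_props:
  assumes "m \<ge> 1"
  shows "closedw (cyc a m y)" "set (cyc a m y) = {a..a + int m - 1} \<times> {y, y + 1}"
    "length (cyc a m y) - 1 = 2 * m"
proof -
  define L1 where "L1 = map (\<lambda>k. (a + int k, y)) [0..<m]"
  define L2 where "L2 = map (\<lambda>k. (a + int k, y + 1)) (rev [0..<m])"
  have s1: "successively adj L1" unfolding L1_def successively_map
    by (rule succ_upt) (simp add: adj_def)
  have s2: "successively adj L2" unfolding L2_def successively_map successively_rev
    by (rule succ_upt) (simp add: adj_def)
  have ne: "L1 \<noteq> []" "L2 \<noteq> []" using assms unfolding L1_def L2_def by auto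
  have l1: "last L1 = (a + int (m - 1), y)" unfolding L1_def using assms
    by (simp add: last_map)
  have h2: "hd L2 = (a + int (m - 1), y + 1)" unfolding L2_def using assms
    by (simp add: hd_map hd_rev last_map)
  have l2: "last L2 = (a, y + 1)" unfolding L2_def using assms
    by (simp add: last_map last_rev hd_map)
  have "successively adj (L1 @ L2 @ [(a, y)])"
    using s1 s2 ne l1 h2 l2 unfolding successively_append_iff by (simp add: adj_def)
  moreover have "hd L1 = (a, y)" unfolding L1_def using assms by (simp add: hd_map)
  ultimately show "closedw (cyc a m y)" unfolding cyc_def L1_def[symmetric] L2_def[symmetric]
    closedw_def is_path_succ using ne by simp
  show "length (cyc a m y) - 1 = 2 * m" unfolding cyc_def by simp
  have "set L1 = {a..a + int m - 1} \<times> {y}"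
  proof -
    have "set L1 = (\<lambda>k. (a + int k, y)) ` {0..<m}" unfolding L1_def by simp
    also have "\<dots> = {a..a + int m - 1} \<times> {y}" by (rule img_line)
    finally show ?thesis .
  qed
  moreover have "set L2 = {a..a + int m - 1} \<times> {y + 1}"
  proof -
    have "set L2 = (\<lambda>k. (a + int k, y + 1)) ` {0..<m}" unfolding L2_def by simp
    also have "\<dots> = {a..a + int m - 1} \<times> {y + 1}" by (rule img_line)
    finally show ?thesis .
  qed
  moreover have "(a, y) \<in> set L1" using `hd L1 = (a, y)` ne(1) by (metis list.set_sel(1))
  ultimately show "set (cyc a m y) = {a..a + int m - 1} \<times> {y, y + 1}"
    unfolding cyc_def L1_def[symmetric] L2_def[symmetric] by auto
qed

definition full :: "pt set \<Rightarrow> int \<Rightarrow> int \<Rightarrow> bool" where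
  "full V j x \<longleftrightarrow> (x, 2 * j) \<in> V \<and> (x, 2 * j + 1) \<in> V"

definition runs :: "pt set \<Rightarrow> (int \<times> int \<times> int) set" where
  "runs V = {(j, a, b). a \<le> b \<and> (\<forall>x. a \<le> x \<and> x \<le> b \<longrightarrow> full V j x)
              \<and> \<not> full V j (a - 1) \<and> \<not> full V j (b + 1)}"

definition partner :: "pt \<Rightarrow> pt" where
  "partner p = (fst p, if even (snd p) then snd p + 1 else snd p - 1)"

definition singles :: "pt set \<Rightarrow> pt set" where
  "singles V = {p \<in> V. partner p \<notin> V}"

definition rect :: "int \<times> int \<times> int \<Rightarrow> pt set" where
  "rect r = (case r of (j, a, b) \<Rightarrow> {a..b} \<times> {2 * j, 2 * j + 1})"

definition rw :: "int \<times> int \<times> int \<Rightarrow> pt list" where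
  "rw r = (case r of (j, a, b) \<Rightarrow> cyc a (nat (b - a + 1)) (2 * j))"

definition gpt :: "pt set \<Rightarrow> int \<times> int \<times> int \<Rightarrow> pt" where
  "gpt V r = (case r of (j, a, b) \<Rightarrow> if (b + 1, 2 * j) \<notin> V then (b, 2 * j) else (b, 2 * j + 1))"

lemma adj_partner: "adj p (partner p)"
  unfolding adj_def partner_def by auto

lemma singles_bd: "singles V \<subseteq> inner_boundary V"
  unfolding singles_def inner_boundary_def using adj_partner by blast

lemma runs_unique:
  assumes "(j, a, b) \<in> runs V" "(j, a', b') \<in> runs V" "a \<le> x" "x \<le> b" "a' \<le> x" "x \<le> b'"
  shows "a = a' \<and> b = b'"
proof -
  have "\<not> a < a'"
  proof
    assume "a < a'"
    then have "full V j (a' - 1)" using assms unfolding runs_def by auto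
    then show False using assms(2) unfolding runs_def by auto
  qed
  moreover have "\<not> a' < a"
  proof
    assume "a' < a"
    then have "full V j (a - 1)" using assms unfolding runs_def by auto
    then show False using assms(1) unfolding runs_def by auto
  qed
  moreover have "\<not> b < b'"
  proof
    assume "b < b'"
    then have "full V j (b + 1)" using assms unfolding runs_def by auto
    then show False using assms(1) unfolding runs_def by auto
  qed
  moreover have "\<not> b' < b"
  proof
    assume "b' < b"
    then have "full V j (b' + 1)" using assms unfolding runs_def by auto
    then show False using assms(2) unfolding runs_def by auto
  qed
  ultimately show ?thesis by auto
qed

lemma gpt_props:
  assumes "r \<in> runs V"
  shows "gpt V r \<in> inner_boundary V" "gpt V r \<notin> singles V"
proof -
  obtain j a b where r: "r = (j, a, b)" by (cases r) auto
  have fb: "full V j b" and nf: "\<not> full V j (b + 1)" using assms unfolding r runs_def by auto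
  show "gpt V r \<in> inner_boundary V"
  proof (cases "(b + 1, 2 * j) \<in> V")
    case True
    then have "(b + 1, 2 * j + 1) \<notin> V" using nf unfolding full_def by auto
    moreover have "adj (b, 2 * j + 1) (b + 1, 2 * j + 1)" unfolding adj_def by simp
    ultimately show ?thesis using True fb unfolding gpt_def r inner_boundary_def full_def by auto
  next
    case False
    moreover have "adj (b, 2 * j) (b + 1, 2 * j)" unfolding adj_def by simp
    ultimately show ?thesis using fb unfolding gpt_def r inner_boundary_def full_def by auto
  qed
  have "partner (b, 2 * j) = (b, 2 * j + 1)" "partner (b, 2 * j + 1) = (b, 2 * j)"
    unfolding partner_def by auto
  then show "gpt V r \<notin> singles V" using fb unfolding gpt_def r singles_def full_def by auto
qed

lemma gpt_inj: "inj_on (gpt V) (runs V)"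
proof (rule inj_onI)
  fix r r' assume rr: "r \<in> runs V" "r' \<in> runs V" "gpt V r = gpt V r'"
  obtain j a b where r: "r = (j, a, b)" by (cases r) auto
  obtain j' a' b' where r': "r' = (j', a', b')" by (cases r') auto
  have eq: "b = b'" "j = j'" using rr(3) unfolding r r' gpt_def by (auto split: if_splits)
  have "a \<le> b" "a' \<le> b'" using rr unfolding r r' runs_def by auto
  then have "a = a'" using runs_unique[of j a b V a' b' b] rr(1,2) unfolding r r' eq by auto
  then show "r = r'" using r r' eq by simp
qed

lemma runs_finite_card:
  assumes "finite V"
  shows "finite (runs V)" "card (runs V) + card (singles V) \<le> card (inner_boundary V)"
proof -
  have fb: "finite (inner_boundary V)" using assms unfolding inner_boundary_def by auto
  have sub: "gpt V ` runs V \<subseteq> inner_boundary V" using gpt_props by blast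
  then have "finite (gpt V ` runs V)" using fb finite_subset by blast
  then show fr: "finite (runs V)" using gpt_inj finite_imageD by blast
  have fs: "finite (singles V)" using singles_bd fb finite_subset by blast
  have dis: "gpt V ` runs V \<inter> singles V = {}" using gpt_props by blast
  have "card (runs V) + card (singles V) = card (gpt V ` runs V) + card (singles V)"
    using gpt_inj card_image by metis
  also have "\<dots> = card (gpt V ` runs V \<union> singles V)"
    using dis fs fr by (simp add: card_Un_disjoint)
  also have "\<dots> \<le> card (inner_boundary V)"
    using sub singles_bd fb by (intro card_mono) auto
  finally show "card (runs V) + card (singles V) \<le> card (inner_boundary V)" .
qed

lemma rw_props:
  assumes "r \<in> runs V"
  shows "closedw (rw r)" "set (rw r) = rect r" "length (rw r) - 1 = card (rect r)" "rect r \<subseteq> V"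
proof -
  obtain j a b where r: "r = (j, a, b)" by (cases r) auto
  have ab: "a \<le> b" and fu: "\<And>x. a \<le> x \<Longrightarrow> x \<le> b \<Longrightarrow> full V j x"
    using assms unfolding r runs_def by auto
  have m: "nat (b - a + 1) \<ge> 1" using ab by simp
  have e: "a + int (nat (b - a + 1)) - 1 = b" using ab by simp
  have e2: "2 * j + 1 = 2 * j + (1::int)" by simp
  show "closedw (rw r)" unfolding rw_def r using cyc_props(1)[OF m] by simp
  show st: "set (rw r) = rect r" unfolding rw_def r rect_def using cyc_props(2)[OF m] e by simp
  have "card (rect r) = nat (b - a + 1) * 2" unfolding rect_def r
    by (simp add: card_cartesian_product)
  then show "length (rw r) - 1 = card (rect r)" unfolding rw_def r using cyc_props(3)[OF m] by simp
  show "rect r \<subseteq> V" unfolding rect_def r using fu unfolding full_def by auto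
qed

lemma rect_disj:
  assumes "r \<in> runs V" "r' \<in> runs V" "r \<noteq> r'"
  shows "rect r \<inter> rect r' = {}"
proof (rule ccontr)
  obtain j a b where r: "r = (j, a, b)" by (cases r) auto
  obtain j' a' b' where r': "r' = (j', a', b')" by (cases r') auto
  assume "rect r \<inter> rect r' \<noteq> {}"
  then obtain q where q: "q \<in> rect r" "q \<in> rect r'" by blast
  obtain x y where qxy: "q = (x, y)" by (cases q) auto
  have xy: "a \<le> x" "x \<le> b" "a' \<le> x" "x \<le> b'" "y = 2 * j \<or> y = 2 * j + 1"
    "y = 2 * j' \<or> y = 2 * j' + 1" using q unfolding qxy rect_def r r' by auto
  have "j = j'" using xy(5,6) by presburger
  then have "a = a' \<and> b = b'" using runs_unique[of j a b V a' b' x] assms(1,2) xy unfolding r r' by auto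
  then show False using assms(3) r r' `j = j'` by simp
qed

lemma cover:
  assumes "finite V"
  shows "V \<subseteq> singles V \<union> \<Union>(rect ` runs V)"
proof
  fix p assume pV: "p \<in> V"
  obtain x y where p: "p = (x, y)" by (cases p) auto
  show "p \<in> singles V \<union> \<Union>(rect ` runs V)"
  proof (cases "partner p \<in> V")
    case False then show ?thesis using pV unfolding singles_def by auto
  next
    case True
    define j where "j = y div 2"
    have yj: "y = 2 * j \<or> y = 2 * j + 1" unfolding j_def by presburger
    have fx: "full V j x" using True pV yj unfolding full_def partner_def p by auto
    define A where "A = {a. a \<le> x \<and> (\<forall>t. a \<le> t \<and> t \<le> x \<longrightarrow> full V j t)}"
    define B where "B = {b. x \<le> b \<and> (\<forall>t. x \<le> t \<and> t \<le> b \<longrightarrow> full V j t)}"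
    have fV: "finite (fst ` V)" using assms by simp
    have "A \<subseteq> fst ` V"
    proof
      fix a assume "a \<in> A"
      then have "(a, 2 * j) \<in> V" unfolding A_def full_def by auto
      then show "a \<in> fst ` V" by force
    qed
    then have fA: "finite A" using fV finite_subset by blast
    have "B \<subseteq> fst ` V"
    proof
      fix a assume "a \<in> B"
      then have "(a, 2 * j) \<in> V" unfolding B_def full_def by auto
      then show "a \<in> fst ` V" by force
    qed
    then have fB: "finite B" using fV finite_subset by blast
    have xA: "x \<in> A" "x \<in> B" unfolding A_def B_def using fx by (auto simp: antisym)
    define a where "a = Min A"
    define b where "b = Max B"
    have aA: "a \<in> A" unfolding a_def using fA xA by (intro Min_in) auto
    have bB: "b \<in> B" unfolding b_def using fB xA by (intro Max_in) auto
    have na: "\<not> full V j (a - 1)"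
    proof
      assume "full V j (a - 1)"
      moreover have "full V j t" if "a \<le> t" "t \<le> x" for t using aA that unfolding A_def by auto
      ultimately have "full V j t" if "a - 1 \<le> t" "t \<le> x" for t
        using that by (cases "t = a - 1") auto
      then have "a - 1 \<in> A" using aA unfolding A_def by auto
      then have "a \<le> a - 1" unfolding a_def using fA by (intro Min_le) auto
      then show False by simp
    qed
    have nb: "\<not> full V j (b + 1)"
    proof
      assume "full V j (b + 1)"
      moreover have "full V j t" if "x \<le> t" "t \<le> b" for t using bB that unfolding B_def by auto
      ultimately have "full V j t" if "x \<le> t" "t \<le> b + 1" for t
        using that by (cases "t = b + 1") auto
      then have "b + 1 \<in> B" using bB unfolding B_def by auto
      then have "b + 1 \<le> b" unfolding b_def using fB by (intro Max_ge) auto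
      then show False by simp
    qed
    have allf: "\<forall>t. a \<le> t \<and> t \<le> b \<longrightarrow> full V j t"
    proof (intro allI impI)
      fix t assume "a \<le> t \<and> t \<le> b"
      then show "full V j t" using aA bB unfolding A_def B_def by (cases "t \<le> x") auto
    qed
    have ax: "a \<le> x" "x \<le> b" using aA bB unfolding A_def B_def by auto
    have "(j, a, b) \<in> runs V" unfolding runs_def using na nb allf ax by auto
    moreover have "p \<in> rect (j, a, b)" unfolding rect_def p using ax yj by auto
    ultimately show ?thesis by blast
  qed
qed

lemma main_bound:
  assumes fin: "finite V" and conn: "connected_Z2 V" and ne: "V \<noteq> {}"
  shows "l_TS V \<le> card V + 2 * card (inner_boundary V)"
proof -
  obtain p0 where p0: "p0 \<in> V" using ne by blast
  define Ws where "Ws = rw ` runs V \<union> (\<lambda>p. [p]) ` singles V"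
  have fr: "finite (runs V)" using runs_finite_card[OF fin] by simp
  have fs: "finite (singles V)" using fin unfolding singles_def by auto
  have fW: "finite Ws" unfolding Ws_def using fr fs by simp
  have c0: "closedw [p0]" unfolding closedw_def is_path_def by simp
  have W1: "\<forall>w\<in>rw ` runs V. closedw w \<and> set w \<subseteq> V" using rw_props[of _ V] by auto
  have W2: "\<forall>w\<in>(\<lambda>p. [p]) ` singles V. closedw w \<and> set w \<subseteq> V"
    unfolding singles_def closedw_def is_path_def by auto
  have Wok: "\<forall>w\<in>Ws. closedw w \<and> set w \<subseteq> V" using W1 W2 unfolding Ws_def by blast
  have "V \<subseteq> singles V \<union> \<Union>(rect ` runs V)" by (rule cover[OF fin])
  moreover have "\<Union>(set ` Ws) = singles V \<union> \<Union>(rect ` runs V)"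
    unfolding Ws_def using rw_props(2)[of _ V] by auto
  ultimately have cov: "V \<subseteq> set [p0] \<union> \<Union>(set ` Ws)" by auto
  obtain c' where c': "closedw c'" "V \<subseteq> set c'"
    "length c' - 1 \<le> (length [p0] - 1) + (\<Sum>w\<in>Ws. length w - 1) + 2 * card Ws"
    using merge_all[OF conn fW refl c0 _ Wok cov] p0 by auto
  have "(\<Sum>w\<in>Ws. length w - 1) \<le> (\<Sum>w\<in>rw ` runs V. length w - 1) + (\<Sum>w\<in>(\<lambda>p. [p]) ` singles V. length w - 1)"
    unfolding Ws_def using fr fs by (simp add: sum_Un_nat)
  also have "(\<Sum>w\<in>(\<lambda>p. [p]) ` singles V. length w - 1) = 0" by (intro sum.neutral) auto
  also have "(\<Sum>w\<in>rw ` runs V. length w - 1) \<le> (\<Sum>r\<in>runs V. length (rw r) - 1)"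
    using sum_image_le[of "runs V" "\<lambda>w. length w - 1" rw] fr by (simp add: comp_def)
  also have "\<dots> = (\<Sum>r\<in>runs V. card (rect r))" using rw_props(3)[of _ V] by (intro sum.cong) auto
  also have "\<dots> = card (\<Union>(rect ` runs V))"
  proof (rule card_UN_disjoint[symmetric])
    show "finite (runs V)" by (rule fr)
    show "\<forall>i\<in>runs V. finite (rect i)" using rw_props(4)[of _ V] fin finite_subset by blast
    show "\<forall>i\<in>runs V. \<forall>j\<in>runs V. i \<noteq> j \<longrightarrow> rect i \<inter> rect j = {}" using rect_disj[of _ V] by blast
  qed
  also have "\<dots> \<le> card V" using rw_props(4)[of _ V] fin by (intro card_mono) auto
  finally have s1: "(\<Sum>w\<in>Ws. length w - 1) \<le> card V" by simp
  have "card Ws \<le> card (rw ` runs V) + card ((\<lambda>p. [p]) ` singles V)"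
    unfolding Ws_def by (rule card_Un_le)
  also have "\<dots> \<le> card (runs V) + card (singles V)" by (intro add_mono card_image_le fr fs)
  also have "\<dots> \<le> card (inner_boundary V)" using runs_finite_card[OF fin] by simp
  finally have s2: "card Ws \<le> card (inner_boundary V)" .
  have "l_TS V \<le> length c' - 1" by (rule lTS_le[OF c'(1,2)])
  then show ?thesis using c'(3) s1 s2 by simp
qed

lemma powr_third_ge: "0 \<le> (t::real) \<Longrightarrow> t \<le> 1 \<Longrightarrow> t \<le> t powr (1/3)"
  using powr_mono'[of "1/3" 1 t] by simp

theorem lemma2p1:
  fixes V :: "(int \<times> int) set"
  assumes "finite V" and "connected_Z2 V"
  shows "real (l_TS V) \<le>
           real (card V) * (1 + 8 * (real (card (inner_boundary V)) / real (card V)) powr (1/3))"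
proof (cases "V = {}")
  case True
  have c: "closedw [(0, 0)]" unfolding closedw_def is_path_def by simp
  have "l_TS V \<le> length [(0::int, 0::int)] - 1" using lTS_le[OF c] True by blast
  then show ?thesis using True by simp
next
  case False
  define n where "n = real (card V)"
  define b where "b = real (card (inner_boundary V))"
  have npos: "n > 0" using False assms(1) unfolding n_def by (simp add: card_gt_0_iff)
  have "card (inner_boundary V) \<le> card V"
    using assms(1) by (intro card_mono) (auto simp: inner_boundary_def)
  then have bn: "b \<le> n" "0 \<le> b" unfolding b_def n_def by auto
  define t where "t = b / n"
  have t: "0 \<le> t" "t \<le> 1" using bn npos unfolding t_def by auto
  have bt: "b = n * t" using npos unfolding t_def by simp
  have "real (l_TS V) \<le> n + 2 * b"
    using main_bound[OF assms False] unfolding n_def b_def by linarith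
  also have "\<dots> = n + 2 * (n * t)" using bt by simp
  also have "\<dots> \<le> n + 8 * (n * t powr (1/3))"
  proof -
    have "n * t \<le> n * t powr (1/3)" using powr_third_ge[OF t] npos by simp
    moreover have "0 \<le> n * t" using npos t by simp
    ultimately show ?thesis by linarith
  qed
  also have "\<dots> = n * (1 + 8 * t powr (1/3))" by (simp add: algebra_simps)
  finally show ?thesis unfolding n_def b_def t_def .
qed

end
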